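(* Every convex subset of $\mathbb{R}^2$ is closed-disk drawable.
   Context: For $A\subseteq\mathbb{R}^2$ let $N_{\le}(A)=\{x\in\mathbb{R}^2: |x-a|\le 1 \text{ for some } a\in A\}$. Let $\mathcal{D}_{\le,1}=\{N_{\le}(A_1): A_1\subseteq\mathbb{R}^2\}$ and for $n\ge 2$ let $\mathcal{D}_{\le,n}=\{D\cup N_{\le}(A_n): D\in\mathcal{D}_{\le,n-1}, A_n\subseteq\mathbb{R}^2\}$ if $n$ is odd and $\mathcal{D}_{\le,n}=\{D\setminus N_{\le}(A_n): D\in\mathcal{D}_{\le,n-1}, A_n\subseteq\mathbb{R}^2\}$ if $n$ is even. A set is closed-disk drawable if it lies in $\mathcal{D}_{\le}=\bigcup_{n\ge1}\mathcal{D}_{\le,n}$. *)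

theory Defs
  imports "HOL-Analysis.Analysis"
begin

definition N_le :: "(real^2) set \<Rightarrow> (real^2) set" where
  "N_le A = {x. \<exists>a\<in>A. dist x a \<le> 1}"

text \<open>D_le n is the family of sets in stage n (stages start at 1; D_le 0 is unused).\<close>
fun D_le :: "nat \<Rightarrow> (real^2) set set" where
  "D_le 0 = {}"
| "D_le (Suc 0) = {N_le A | A. True}"
| "D_le (Suc (Suc m)) =
     (if odd (Suc (Suc m))
      then {D \<union> N_le A | D A. D \<in> D_le (Suc m)}
      else {D - N_le A | D A. D \<in> D_le (Suc m)})"

definition closed_disk_drawable :: "(real^2) set \<Rightarrow> bool" where
  "closed_disk_drawable S \<longleftrightarrow> (\<exists>n\<ge>1. S \<in> D_le n)"

end

theory Submission
  imports Defs
begin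

lemma convex_sep_point:
  fixes C :: "(real^2) set"
  assumes "convex C" "x \<notin> C"
  shows "\<exists>v. norm v = 1 \<and> (\<forall>c\<in>C. v \<bullet> x \<le> v \<bullet> c)"
proof (cases "C = {}")
  case True
  have "norm (axis 1 1 :: real^2) = 1" by simp
  then show ?thesis using True by blast
next
  case False
  obtain a b where ab: "a \<noteq> 0" "\<forall>y\<in>{x}. inner a y \<le> b" "\<forall>y\<in>C. inner a y \<ge> b"
    using separating_hyperplane_sets[of "{x}" C] assms False by auto
  define v where "v = a /\<^sub>R norm a"
  have "norm v = 1" using ab(1) by (simp add: v_def)
  moreover have "\<forall>c\<in>C. v \<bullet> x \<le> v \<bullet> c"
  proof
    fix c assume "c \<in> C"
    then have "a \<bullet> x \<le> a \<bullet> c" using ab by force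
    then show "v \<bullet> x \<le> v \<bullet> c" using ab(1)
      by (simp add: v_def divide_right_mono)
  qed
  ultimately show ?thesis by blast
qed

theorem theorem2p4:
  fixes C :: "(real^2) set"
  assumes "convex C"
  shows "closed_disk_drawable C"
proof -
  define A where "A = {a. \<forall>c\<in>C. dist c a > 1}"
  have U: "N_le UNIV = UNIV" unfolding N_le_def by (metis (mono_tags, lifting) UNIV_I dist_self mem_Collect_eq subsetI subset_antisym zero_le_one)
  have eq: "C = UNIV - N_le A"
  proof (intro set_eqI iffI)
    fix x assume "x \<in> C"
    then show "x \<in> UNIV - N_le A" unfolding N_le_def A_def by force
  next
    fix x assume x: "x \<in> UNIV - N_le A"
    show "x \<in> C"
    proof (rule ccontr)
      assume "x \<notin> C"
      then obtain v where v: "norm v = 1" "\<forall>c\<in>C. v \<bullet> x \<le> v \<bullet> c"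
        using convex_sep_point assms by blast
      have "x - v \<in> A" unfolding A_def mem_Collect_eq
      proof
        fix c assume c: "c \<in> C"
        with \<open>x \<notin> C\<close> have "c \<noteq> x" by auto
        then have p: "norm (c - x) > 0" by simp
        have "(dist c (x - v))\<^sup>2 = (norm ((c - x) + v))\<^sup>2" by (simp add: dist_norm algebra_simps)
        also have "\<dots> = (norm (c - x))\<^sup>2 + 2 * (v \<bullet> (c - x)) + (norm v)\<^sup>2"
          by (simp add: power2_norm_eq_inner inner_add_left inner_add_right inner_commute)
        also have "\<dots> > 1"
        proof -
          have "v \<bullet> (c - x) \<ge> 0" using v c by (simp add: inner_diff_right)
          moreover have "(norm (c - x))\<^sup>2 > 0" using p by (simp only: zero_less_power)
          ultimately show ?thesis using v(1)
            by (metis add_pos_nonneg less_add_same_cancel2 mult_nonneg_nonneg zero_le_numeral power_one)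
        qed
        finally have "(dist c (x - v))\<^sup>2 > 1\<^sup>2" by simp
        then show "dist c (x - v) > 1"
          by (rule power_less_imp_less_base[OF _ zero_le_dist])
      qed
      moreover have "dist x (x - v) \<le> 1" using v by (simp add: dist_norm)
      ultimately have "x \<in> N_le A" unfolding N_le_def by blast
      then show False using x by simp
    qed
  qed
  have "C \<in> D_le 2"
    using eq U by (auto simp: numeral_2_eq_2)
  then show ?thesis unfolding closed_disk_drawable_def by (intro exI[of _ 2]) simp
qed

end
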